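(* For all integers $n\ge 1$, $$s_4(n)=\tfrac{4}{15}n^5-\tfrac{4}{3}n^4+\tfrac{11}{3}n^3-\tfrac{37}{6}n^2+\tfrac{167}{30}n-2,$$ $$d_4(n)=\tfrac{4}{45}n^6-\tfrac{2}{5}n^5+\tfrac{25}{18}n^4-\tfrac{7}{2}n^3+\tfrac{226}{45}n^2-\tfrac{18}{5}n+1.$$
   Context: For $n\ge 1$, the $2\times n$ board consists of $2n$ unit squares arranged in 2 rows and $n$ columns; two squares are adjacent iff they share an edge. A piece is a nonempty set of squares that is connected under adjacency. A division of the board into $k$ pieces is a partition of the set of all $2n$ squares into exactly $k$ pieces. $d_k(n)$ denotes the number of divisions of the $2\times n$ board into $k$ pieces. $s_k(n)$ denotes the number of such divisions in which the two squares of the rightmost column lie in different pieces. *)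

theory Defs
  imports Complex_Main
begin

definition board :: "nat \<Rightarrow> (nat \<times> nat) set" where
  "board n = {(r, c). r < 2 \<and> c < n}"

definition adj :: "nat \<times> nat \<Rightarrow> nat \<times> nat \<Rightarrow> bool" where
  "adj p q \<longleftrightarrow> (fst p = fst q \<and> (snd p = snd q + 1 \<or> snd q = snd p + 1)) \<or>
                 (snd p = snd q \<and> (fst p = fst q + 1 \<or> fst q = fst p + 1))"

definition connected_sq :: "(nat \<times> nat) set \<Rightarrow> bool" where
  "connected_sq P \<longleftrightarrow>
     (\<forall>x\<in>P. \<forall>y\<in>P. (x, y) \<in> {(u, v). u \<in> P \<and> v \<in> P \<and> adj u v}\<^sup>*)"

definition piece :: "(nat \<times> nat) set \<Rightarrow> bool" where
  "piece P \<longleftrightarrow> P \<noteq> {} \<and> connected_sq P"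

definition division :: "nat \<Rightarrow> nat \<Rightarrow> (nat \<times> nat) set set \<Rightarrow> bool" where
  "division n k D \<longleftrightarrow>
     (\<forall>P\<in>D. piece P) \<and> \<Union>D = board n \<and>
     (\<forall>P\<in>D. \<forall>Q\<in>D. P \<noteq> Q \<longrightarrow> P \<inter> Q = {}) \<and>
     finite D \<and> card D = k"

definition d :: "nat \<Rightarrow> nat \<Rightarrow> nat" where
  "d k n = card {D. division n k D}"

definition s :: "nat \<Rightarrow> nat \<Rightarrow> nat" where
  "s k n = card {D. division n k D \<and>
                   (\<forall>P\<in>D. \<not> ((0, n - 1) \<in> P \<and> (1, n - 1) \<in> P))}"

end

theory Submission imports Defs begin


definition edg :: "(nat \<times> nat) set \<Rightarrow> ((nat \<times> nat) \<times> (nat \<times> nat)) set" where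
  "edg P = {(u, v). u \<in> P \<and> v \<in> P \<and> adj u v}"

lemma conn_def2: "connected_sq P \<longleftrightarrow> (\<forall>x\<in>P. \<forall>y\<in>P. (x, y) \<in> (edg P)\<^sup>*)"
  by (simp add: connected_sq_def edg_def)

lemma adj_sym: "adj p q \<Longrightarrow> adj q p"
  by (auto simp: adj_def)

lemma adj_irrefl: "\<not> adj p p"
  by (auto simp: adj_def)

lemma edg_mono: "P \<subseteq> Q \<Longrightarrow> (edg P)\<^sup>* \<subseteq> (edg Q)\<^sup>*"
  by (rule rtrancl_mono) (auto simp: edg_def)

lemma conn_single: "connected_sq {p}"
  by (simp add: conn_def2)

lemma conn_union:
  assumes P: "connected_sq P" and Q: "connected_sq Q" and "p \<in> P" "q \<in> Q" "adj p q"
  shows "connected_sq (P \<union> Q)"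
proof -
  have mP: "(edg P)\<^sup>* \<subseteq> (edg (P \<union> Q))\<^sup>*" and mQ: "(edg Q)\<^sup>* \<subseteq> (edg (P \<union> Q))\<^sup>*"
    by (simp_all add: edg_mono)
  have pq: "(p, q) \<in> (edg (P \<union> Q))\<^sup>*" "(q, p) \<in> (edg (P \<union> Q))\<^sup>*"
    using assms by (auto simp: edg_def intro: adj_sym)
  show ?thesis unfolding conn_def2
  proof (intro ballI)
    fix u v assume u: "u \<in> P \<union> Q" and v: "v \<in> P \<union> Q"
    show "(u, v) \<in> (edg (P \<union> Q))\<^sup>*"
    proof (cases "u \<in> P")
      case True
      note uP = True
      show ?thesis
      proof (cases "v \<in> P")
        case True thus ?thesis using uP P mP by (auto simp: conn_def2)
      next
        case False
        hence "v \<in> Q" using v by auto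
        hence "(u, p) \<in> (edg (P \<union> Q))\<^sup>*" "(q, v) \<in> (edg (P \<union> Q))\<^sup>*"
          using uP P Q mP mQ assms(3,4) by (auto simp: conn_def2)
        thus ?thesis using pq by (meson rtrancl_trans)
      qed
    next
      case False
      hence uQ: "u \<in> Q" using u by auto
      show ?thesis
      proof (cases "v \<in> Q")
        case True thus ?thesis using uQ Q mQ by (auto simp: conn_def2)
      next
        case False
        hence "v \<in> P" using v by auto
        hence "(u, q) \<in> (edg (P \<union> Q))\<^sup>*" "(p, v) \<in> (edg (P \<union> Q))\<^sup>*"
          using uQ P Q mP mQ assms(3,4) by (auto simp: conn_def2)
        thus ?thesis using pq by (meson rtrancl_trans)
      qed
    qed
  qed
qed

lemma crossing:
  assumes "(u, v) \<in> R\<^sup>*" "u \<in> A" "v \<notin> A"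
  shows "\<exists>s t. (s, t) \<in> R \<and> s \<in> A \<and> t \<notin> A"
  using assms by (induction rule: rtrancl_induct) auto

lemma conn_remove:
  assumes Q: "connected_sq Q" and TQ: "T \<subseteq> Q" and XT: "X \<subseteq> T"
    and Xc: "\<forall>z1\<in>X. \<forall>z2\<in>X. (z1, z2) \<in> (edg T)\<^sup>*"
    and nb: "\<forall>s\<in>Q - T. \<forall>t\<in>T. adj s t \<longrightarrow> t \<in> X"
  shows "connected_sq T"
  unfolding conn_def2
proof (intro ballI)
  fix u v assume u: "u \<in> T" and v: "v \<in> T"
  have uv: "(u, v) \<in> (edg Q)\<^sup>*" using Q u v TQ by (auto simp: conn_def2)
  have "(w \<in> T \<longrightarrow> (u, w) \<in> (edg T)\<^sup>*) \<and> (w \<notin> T \<longrightarrow> (\<forall>z\<in>X. (u, z) \<in> (edg T)\<^sup>*))"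
    if "(u, w) \<in> (edg Q)\<^sup>*" for w
    using that
  proof (induction rule: rtrancl_induct)
    case base thus ?case using u by auto
  next
    case (step w w')
    have w: "w \<in> Q" and w': "w' \<in> Q" and a: "adj w w'" using step(2) by (auto simp: edg_def)
    show ?case
    proof (cases "w \<in> T")
      case True
      note wT = True
      hence uw: "(u, w) \<in> (edg T)\<^sup>*" using step(3) by auto
      show ?thesis
      proof (cases "w' \<in> T")
        case True
        hence "(w, w') \<in> edg T" using wT a by (auto simp: edg_def)
        thus ?thesis using uw True by (meson rtrancl.rtrancl_into_rtrancl)
      next
        case False
        hence "w \<in> X" using nb w' wT a adj_sym by blast
        thus ?thesis using uw Xc False by (meson rtrancl_trans)
      qed
    next
      case False
      hence IH: "\<forall>z\<in>X. (u, z) \<in> (edg T)\<^sup>*" using step(3) by auto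
      show ?thesis
      proof (cases "w' \<in> T")
        case True
        hence "w' \<in> X" using nb w False a by blast
        thus ?thesis using IH True by auto
      next
        case False thus ?thesis using IH by auto
      qed
    qed
  qed
  thus "(u, v) \<in> (edg T)\<^sup>*" using uv v by auto
qed



definition part :: "(nat \<times> nat) set \<Rightarrow> (nat \<times> nat) set set \<Rightarrow> bool" where
  "part U D \<longleftrightarrow> (\<forall>P\<in>D. piece P) \<and> \<Union>D = U \<and> (\<forall>P\<in>D. \<forall>Q\<in>D. P \<noteq> Q \<longrightarrow> P \<inter> Q = {}) \<and> finite D"

lemma division_part: "division n k D \<longleftrightarrow> part (board n) D \<and> card D = k"
  by (auto simp: division_def part_def)

definition pc :: "(nat \<times> nat) set set \<Rightarrow> nat \<times> nat \<Rightarrow> (nat \<times> nat) set" where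
  "pc D z = (THE P. P \<in> D \<and> z \<in> P)"

lemma pc_eq: assumes "part U D" "P \<in> D" "z \<in> P" shows "pc D z = P"
  unfolding pc_def
proof (rule the_equality)
  show "P \<in> D \<and> z \<in> P" using assms by auto
  fix Q assume "Q \<in> D \<and> z \<in> Q" thus "Q = P" using assms unfolding part_def by blast
qed

lemma pc_in: assumes "part U D" "z \<in> U" shows "pc D z \<in> D" "z \<in> pc D z"
proof -
  obtain P where "P \<in> D" "z \<in> P" using assms unfolding part_def by blast
  thus "pc D z \<in> D" "z \<in> pc D z" using pc_eq[OF assms(1)] by auto
qed

lemma part_sub: "part U D \<Longrightarrow> P \<in> D \<Longrightarrow> P \<subseteq> U"
  by (auto simp: part_def)

lemma part_ne: "part U D \<Longrightarrow> P \<in> D \<Longrightarrow> P \<noteq> {}"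
  by (auto simp: part_def piece_def)

lemma part_disj: "part U D \<Longrightarrow> P \<in> D \<Longrightarrow> Q \<in> D \<Longrightarrow> P \<noteq> Q \<Longrightarrow> P \<inter> Q = {}"
  by (auto simp: part_def)

definition ext :: "(nat \<times> nat) set set \<Rightarrow> (nat \<times> nat) set \<Rightarrow> (nat \<times> nat) set \<Rightarrow> (nat \<times> nat) set set" where
  "ext D P A = insert (P \<union> A) (D - {P})"

lemma part_add:
  assumes "part U D" "piece A" "A \<inter> U = {}"
  shows "part (U \<union> A) (insert A D)" "card (insert A D) = Suc (card D)"
proof -
  have "A \<notin> D" using assms part_sub[OF assms(1)] by (auto simp: piece_def)
  thus "card (insert A D) = Suc (card D)" using assms(1) by (auto simp: part_def)
  have sub: "\<forall>Q\<in>D. Q \<subseteq> U" using part_sub[OF assms(1)] by auto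
  have d: "\<forall>Q\<in>D. Q \<inter> A = {} \<and> A \<inter> Q = {}" using sub assms(3) by blast
  show "part (U \<union> A) (insert A D)" using assms(1,2) d unfolding part_def by auto
qed

lemma part_ext:
  assumes "part U D" "P \<in> D" "A \<inter> U = {}" "A \<noteq> {}" "connected_sq (P \<union> A)"
  shows "part (U \<union> A) (ext D P A)" "card (ext D P A) = card D"
proof -
  have fin: "finite D" using assms(1) by (auto simp: part_def)
  have "P \<union> A \<notin> D - {P}" using assms part_sub[OF assms(1)] by blast
  hence "card (ext D P A) = Suc (card (D - {P}))" using fin by (simp add: ext_def)
  also have "\<dots> = card D" using fin assms(2) by (rule card_Suc_Diff1)
  finally show "card (ext D P A) = card D" .
  have sub: "\<forall>Q\<in>D. Q \<subseteq> U" using part_sub[OF assms(1)] by auto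
  have d: "\<forall>Q\<in>D - {P}. Q \<inter> (P \<union> A) = {} \<and> (P \<union> A) \<inter> Q = {}"
    using sub assms(3) part_disj[OF assms(1)] assms(2) by blast
  have pc: "\<forall>Q\<in>D - {P}. piece Q" using assms(1) by (auto simp: part_def)
  have pn: "piece (P \<union> A)" using assms(4,5) by (auto simp: piece_def)
  have un: "\<Union>(insert (P \<union> A) (D - {P})) = U \<union> A"
  proof -
    have "\<Union>(insert (P \<union> A) (D - {P})) = \<Union>D \<union> A" using assms(2) by blast
    thus ?thesis using assms(1) by (simp add: part_def)
  qed
  have dd: "\<forall>Q1\<in>D - {P}. \<forall>Q2\<in>D - {P}. Q1 \<noteq> Q2 \<longrightarrow> Q1 \<inter> Q2 = {}"
    using part_disj[OF assms(1)] by blast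
  show "part (U \<union> A) (ext D P A)" unfolding part_def ext_def
    using d pc pn un dd fin by auto
qed

definition strip :: "(nat \<times> nat) set \<Rightarrow> (nat \<times> nat) set set \<Rightarrow> (nat \<times> nat) set set" where
  "strip U D = (\<lambda>Q. Q \<inter> U) ` D - {{}}"

lemma strip_id: assumes "\<forall>P\<in>D. P \<subseteq> U \<and> P \<noteq> {}" shows "strip U D = D"
proof -
  have "(\<lambda>Q. Q \<inter> U) ` D = D" using assms by (auto simp: image_iff Int_absorb2)
  thus ?thesis using assms unfolding strip_def by auto
qed

lemma strip_ins: "A \<inter> U = {} \<Longrightarrow> strip U (insert A D) = strip U D"
  unfolding strip_def by auto

lemma strip_ext: assumes "P \<in> D" "A \<inter> U = {}" "P \<inter> U \<noteq> {}" shows "strip U (ext D P A) = strip U D"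
proof -
  have e: "(P \<union> A) \<inter> U = P \<inter> U" using assms(2) by blast
  have "(\<lambda>Q. Q \<inter> U) ` (ext D P A) = (\<lambda>Q. Q \<inter> U) ` D"
    unfolding ext_def using e assms(1) by auto
  thus ?thesis unfolding strip_def by simp
qed

lemma strip_part: "part U D \<Longrightarrow> strip U D = D"
  by (rule strip_id) (auto dest: part_sub part_ne)



lemma board_Suc: "board (Suc n) = board n \<union> {(0, n), (1, n)}"
  by (auto simp: board_def)

lemma ab_notin: "(0, n) \<notin> board n" "(1, n) \<notin> board n"
  by (auto simp: board_def)

lemma xy_in: "1 \<le> n \<Longrightarrow> (0, n - 1) \<in> board n" "1 \<le> n \<Longrightarrow> (1, n - 1) \<in> board n"
  by (auto simp: board_def)

lemma adj_a: "t \<in> board n \<Longrightarrow> adj (0, n) t \<Longrightarrow> t = (0, n - 1)"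
  by (auto simp: board_def adj_def)

lemma adj_b: "t \<in> board n \<Longrightarrow> adj (1, n) t \<Longrightarrow> t = (1, n - 1)"
  by (auto simp: board_def adj_def)

lemma adj_facts: "1 \<le> n \<Longrightarrow> adj (0, n - 1) (1, n - 1)" "1 \<le> n \<Longrightarrow> adj (0, n - 1) (0, n)"
  "1 \<le> n \<Longrightarrow> adj (1, n - 1) (1, n)" "adj (0::nat, n) (1, n)"
  by (auto simp: adj_def)

lemma adj_a2: "t \<in> board (Suc n) \<Longrightarrow> adj (0, n) t \<Longrightarrow> t = (0, n - 1) \<or> t = (1, n)"
  by (auto simp: board_def adj_def)

lemma adj_b2: "t \<in> board (Suc n) \<Longrightarrow> adj (1, n) t \<Longrightarrow> t = (1, n - 1) \<or> t = (0, n)"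
  by (auto simp: board_def adj_def)

lemma part_strip:
  assumes n: "1 \<le> n" and D: "part (board (Suc n)) D"
  shows "part (board n) (strip (board n) D)"
proof -
  let ?B = "board n"
  have pieces: "piece (Q \<inter> ?B)" if Q: "Q \<in> D" and ne: "Q \<inter> ?B \<noteq> {}" for Q
  proof -
    have cQ: "connected_sq Q" using D Q by (auto simp: part_def piece_def)
    have QB: "Q \<subseteq> board (Suc n)" using part_sub[OF D Q] .
    let ?X = "{(0, n - 1), (1, n - 1)} \<inter> (Q \<inter> ?B)"
    have Xc: "\<forall>z1\<in>?X. \<forall>z2\<in>?X. (z1, z2) \<in> (edg (Q \<inter> ?B))\<^sup>*"
    proof (intro ballI)
      fix z1 z2 assume z: "z1 \<in> ?X" "z2 \<in> ?X"
      show "(z1, z2) \<in> (edg (Q \<inter> ?B))\<^sup>*"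
      proof (cases "z1 = z2")
        case False
        hence "adj z1 z2" using z adj_facts(1)[OF n] adj_sym by auto
        hence "(z1, z2) \<in> edg (Q \<inter> ?B)" using z by (auto simp: edg_def)
        thus ?thesis by auto
      qed auto
    qed
    have nb: "\<forall>s\<in>Q - Q \<inter> ?B. \<forall>t\<in>Q \<inter> ?B. adj s t \<longrightarrow> t \<in> ?X"
    proof (intro ballI impI)
      fix s t assume s: "s \<in> Q - Q \<inter> ?B" and t: "t \<in> Q \<inter> ?B" and a: "adj s t"
      have "s = (0, n) \<or> s = (1, n)" using s QB board_Suc by auto
      thus "t \<in> ?X" using adj_a[of t n] adj_b[of t n] t a by auto
    qed
    have "connected_sq (Q \<inter> ?B)" by (rule conn_remove[OF cQ _ _ Xc nb]) auto
    thus ?thesis using ne by (simp add: piece_def)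
  qed
  have un: "\<Union>(strip ?B D) = ?B"
  proof -
    have "\<Union>(strip ?B D) = (\<Union>D) \<inter> ?B" unfolding strip_def by auto
    thus ?thesis using D by (auto simp: part_def board_def)
  qed
  show ?thesis unfolding part_def
  proof (intro conjI)
    show "\<forall>P\<in>strip ?B D. piece P" using pieces unfolding strip_def by auto
    show "\<Union>(strip ?B D) = ?B" by (rule un)
    show "\<forall>P\<in>strip ?B D. \<forall>Q\<in>strip ?B D. P \<noteq> Q \<longrightarrow> P \<inter> Q = {}"
      unfolding strip_def using part_disj[OF D] by blast
    show "finite (strip ?B D)" using D unfolding strip_def part_def by auto
  qed
qed



definition "E1 n D = insert {(0, n), (1, n)} D"
definition "E2 n D = ext D (pc D (0, n - 1)) {(0, n), (1, n)}"
definition "E3 n D = ext D (pc D (1, n - 1)) {(0, n), (1, n)}"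
definition "E4 n D = insert {(0, n)} (insert {(1, n)} D)"
definition "E5 n D = ext (insert {(1, n)} D) (pc D (0, n - 1)) {(0, n)}"
definition "E6 n D = insert {(0, n)} (ext D (pc D (1, n - 1)) {(1, n)})"
definition "E7 n D = ext (ext D (pc D (1, n - 1)) {(1, n)}) (pc D (0, n - 1)) {(0, n)}"

definition "pat1 n D' \<longleftrightarrow> {(0, n), (1, n)} \<in> D'"
definition "pat2 n D' \<longleftrightarrow> (\<exists>P\<in>D'. (0, n) \<in> P \<and> (1, n) \<in> P \<and> (0, n - 1) \<in> P)"
definition "pat3 n D' \<longleftrightarrow> (\<exists>P\<in>D'. (0, n) \<in> P \<and> (1, n) \<in> P \<and> (1, n - 1) \<in> P \<and> (0, n - 1) \<notin> P)"
definition "pat4 n D' \<longleftrightarrow> {(0, n)} \<in> D' \<and> {(1, n)} \<in> D'"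
definition "pat5 n D' \<longleftrightarrow> {(1, n)} \<in> D' \<and> (\<exists>P\<in>D'. (0, n) \<in> P \<and> (0, n - 1) \<in> P)"
definition "pat6 n D' \<longleftrightarrow> {(0, n)} \<in> D' \<and> (\<exists>Q\<in>D'. (1, n) \<in> Q \<and> (1, n - 1) \<in> Q)"
definition "pat7 n D' \<longleftrightarrow> (\<exists>P\<in>D'. \<exists>Q\<in>D'. (0, n) \<in> P \<and> (0, n - 1) \<in> P \<and> (1, n) \<in> Q \<and> (1, n - 1) \<in> Q \<and> P \<noteq> Q)"

definition "sepd n D \<longleftrightarrow> pc D (0, n - 1) \<noteq> pc D (1, n - 1)"

lemma conn_ab: "connected_sq {(0::nat, n), (1, n)}"
  unfolding conn_def2 edg_def by (auto intro!: r_into_rtrancl simp: adj_def)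

lemma piece_single: "piece {p}" by (simp add: piece_def conn_single)
lemma piece_ab: "piece {(0::nat, n), (1, n)}" unfolding piece_def using conn_ab by blast

lemma setup_facts:
  assumes n: "1 \<le> n" and D: "part (board n) D"
  shows "pc D (0, n - 1) \<in> D" "(0, n - 1) \<in> pc D (0, n - 1)"
    "pc D (1, n - 1) \<in> D" "(1, n - 1) \<in> pc D (1, n - 1)"
    "pc D (0, n - 1) \<subseteq> board n" "pc D (1, n - 1) \<subseteq> board n"
    "connected_sq (pc D (0, n - 1))" "connected_sq (pc D (1, n - 1))"
proof -
  show a: "pc D (0, n - 1) \<in> D" "(0, n - 1) \<in> pc D (0, n - 1)"
    "pc D (1, n - 1) \<in> D" "(1, n - 1) \<in> pc D (1, n - 1)"
    using pc_in[OF D xy_in(1)[OF n]] pc_in[OF D xy_in(2)[OF n]] by auto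
  show "pc D (0, n - 1) \<subseteq> board n" "pc D (1, n - 1) \<subseteq> board n"
    using a part_sub[OF D] by auto
  show "connected_sq (pc D (0, n - 1))" "connected_sq (pc D (1, n - 1))"
    using a D by (auto simp: part_def piece_def)
qed

lemma bd1: "board n \<union> {(0, n), (1, n)} = board (Suc n)" by (auto simp: board_def)
lemma bd2: "board n \<union> {(1, n)} \<union> {(0, n)} = board (Suc n)" by (auto simp: board_def)
lemma bd3: "board n \<union> {(0, n)} \<union> {(1, n)} = board (Suc n)" by (auto simp: board_def)
lemma dj1: "{(0, n), (1, n)} \<inter> board n = {}" "{(0, n)} \<inter> board n = {}" "{(1, n)} \<inter> board n = {}"
  "{(0, n)} \<inter> (board n \<union> {(1, n)}) = {}" "{(1, n)} \<inter> (board n \<union> {(0, n)}) = {}"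
  by (auto simp: board_def)

lemma fwd1:
  assumes n: "1 \<le> n" and D: "division n m D"
  shows "division (Suc n) (Suc m) (E1 n D) \<and> pat1 n (E1 n D) \<and> strip (board n) (E1 n D) = D"
proof -
  have P: "part (board n) D" "card D = m" using D by (auto simp: division_part)
  note r = part_add[OF P(1) piece_ab dj1(1)]
  have s: "strip (board n) (E1 n D) = D"
    unfolding E1_def strip_ins[OF dj1(1)] strip_part[OF P(1)] ..
  show ?thesis using r P s unfolding E1_def division_part pat1_def
    by (simp add: board_Suc)
qed

lemma fwd2:
  assumes n: "1 \<le> n" and D: "division n m D"
  shows "division (Suc n) m (E2 n D) \<and> pat2 n (E2 n D) \<and> strip (board n) (E2 n D) = D"
proof -
  have P: "part (board n) D" "card D = m" using D by (auto simp: division_part)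
  note f = setup_facts[OF n P(1)]
  have c: "connected_sq (pc D (0, n - 1) \<union> {(0, n), (1, n)})"
    by (rule conn_union[OF f(7) conn_ab f(2) _ adj_facts(2)[OF n]]) simp
  note r = part_ext[OF P(1) f(1) dj1(1) _ c]
  have nee: "pc D (0, n - 1) \<inter> board n \<noteq> {}" using f(2) xy_in[OF n] by blast
  have s: "strip (board n) (E2 n D) = D" unfolding E2_def
    strip_ext[OF f(1) dj1(1) nee] strip_part[OF P(1)] ..
  show ?thesis using r P s f unfolding E2_def division_part pat2_def ext_def
    by (simp add: board_Suc)
qed

lemma fwd3:
  assumes n: "1 \<le> n" and D: "division n m D" and sp: "sepd n D"
  shows "division (Suc n) m (E3 n D) \<and> pat3 n (E3 n D) \<and> strip (board n) (E3 n D) = D"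
proof -
  have P: "part (board n) D" "card D = m" using D by (auto simp: division_part)
  note f = setup_facts[OF n P(1)]
  have c: "connected_sq (pc D (1, n - 1) \<union> {(0, n), (1, n)})"
    by (rule conn_union[OF f(8) conn_ab f(4) _ adj_facts(3)[OF n]]) simp
  note r = part_ext[OF P(1) f(3) dj1(1) _ c]
  have nee: "pc D (1, n - 1) \<inter> board n \<noteq> {}" using f(4) xy_in[OF n] by blast
  have s: "strip (board n) (E3 n D) = D" unfolding E3_def
    strip_ext[OF f(3) dj1(1) nee] strip_part[OF P(1)] ..
  have nx: "(0, n - 1) \<notin> pc D (1, n - 1)"
    using part_disj[OF P(1) f(1) f(3)] sp f(2) unfolding sepd_def by auto
  have nx2: "(0, n - 1) \<noteq> (0::nat, n)" "(0, n - 1) \<noteq> (1::nat, n)" using n by auto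
  show ?thesis using r P s f nx nx2 unfolding E3_def division_part pat3_def ext_def
    by (simp add: board_Suc)
qed

lemma fwd4:
  assumes n: "1 \<le> n" and D: "division n m D"
  shows "division (Suc n) (Suc (Suc m)) (E4 n D) \<and> pat4 n (E4 n D) \<and> strip (board n) (E4 n D) = D"
proof -
  have P: "part (board n) D" "card D = m" using D by (auto simp: division_part)
  note r1 = part_add[OF P(1) piece_single dj1(3)]
  note r2 = part_add[OF r1(1) piece_single dj1(4)]
  have s: "strip (board n) (E4 n D) = D"
    unfolding E4_def strip_ins[OF dj1(2)] strip_ins[OF dj1(3)] strip_part[OF P(1)] ..
  show ?thesis using r1 r2 P s unfolding E4_def division_part pat4_def
    by (simp add: board_Suc)
qed

lemma fwd5:
  assumes n: "1 \<le> n" and D: "division n m D"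
  shows "division (Suc n) (Suc m) (E5 n D) \<and> pat5 n (E5 n D) \<and> strip (board n) (E5 n D) = D"
proof -
  have P: "part (board n) D" "card D = m" using D by (auto simp: division_part)
  note f = setup_facts[OF n P(1)]
  note r1 = part_add[OF P(1) piece_single dj1(3)]
  have c: "connected_sq (pc D (0, n - 1) \<union> {(0, n)})"
    by (rule conn_union[OF f(7) conn_single f(2) _ adj_facts(2)[OF n]]) simp
  have f1: "pc D (0, n - 1) \<in> insert {(1, n)} D" using f(1) by simp
  note r = part_ext[OF r1(1) f1 dj1(4) _ c]
  have ne: "pc D (0, n - 1) \<noteq> {(1, n)}" using f(5) ab_notin by auto
  have nee: "pc D (0, n - 1) \<inter> board n \<noteq> {}" using f(2) xy_in[OF n] by blast
  have s: "strip (board n) (E5 n D) = D" unfolding E5_def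
    strip_ext[OF f1 dj1(2) nee] strip_ins[OF dj1(3)] strip_part[OF P(1)] ..
  show ?thesis using r r1 P s f ne unfolding E5_def division_part pat5_def ext_def
    by (simp add: board_Suc)
qed

lemma fwd6:
  assumes n: "1 \<le> n" and D: "division n m D"
  shows "division (Suc n) (Suc m) (E6 n D) \<and> pat6 n (E6 n D) \<and> strip (board n) (E6 n D) = D"
proof -
  have P: "part (board n) D" "card D = m" using D by (auto simp: division_part)
  note f = setup_facts[OF n P(1)]
  have c: "connected_sq (pc D (1, n - 1) \<union> {(1, n)})"
    by (rule conn_union[OF f(8) conn_single f(4) _ adj_facts(3)[OF n]]) simp
  note r1 = part_ext[OF P(1) f(3) dj1(3) _ c]
  note r = part_add[OF r1(1) piece_single dj1(4)]
  have nee: "pc D (1, n - 1) \<inter> board n \<noteq> {}" using f(4) xy_in[OF n] by blast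
  have s: "strip (board n) (E6 n D) = D" unfolding E6_def
    strip_ins[OF dj1(2)] strip_ext[OF f(3) dj1(3) nee] strip_part[OF P(1)] ..
  show ?thesis using r r1 P s f unfolding E6_def division_part pat6_def ext_def
    by (simp add: board_Suc)
qed

lemma fwd7:
  assumes n: "1 \<le> n" and D: "division n m D" and sp: "sepd n D"
  shows "division (Suc n) m (E7 n D) \<and> pat7 n (E7 n D) \<and> strip (board n) (E7 n D) = D"
proof -
  have P: "part (board n) D" "card D = m" using D by (auto simp: division_part)
  note f = setup_facts[OF n P(1)]
  have c1: "connected_sq (pc D (1, n - 1) \<union> {(1, n)})"
    by (rule conn_union[OF f(8) conn_single f(4) _ adj_facts(3)[OF n]]) simp
  note r1 = part_ext[OF P(1) f(3) dj1(3) _ c1]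
  have c: "connected_sq (pc D (0, n - 1) \<union> {(0, n)})"
    by (rule conn_union[OF f(7) conn_single f(2) _ adj_facts(2)[OF n]]) simp
  have f1: "pc D (0, n - 1) \<in> ext D (pc D (1, n - 1)) {(1, n)}"
    using f(1) sp unfolding ext_def sepd_def by simp
  note r = part_ext[OF r1(1) f1 dj1(4) _ c]
  have nee: "pc D (1, n - 1) \<inter> board n \<noteq> {}" using f(4) xy_in[OF n] by blast
  have nee2: "pc D (0, n - 1) \<inter> board n \<noteq> {}" using f(2) xy_in[OF n] by blast
  have s: "strip (board n) (E7 n D) = D" unfolding E7_def
    strip_ext[OF f1 dj1(2) nee2] strip_ext[OF f(3) dj1(3) nee] strip_part[OF P(1)] ..
  have ne: "pc D (1, n - 1) \<union> {(1, n)} \<noteq> pc D (0, n - 1)" using f(5) ab_notin by auto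
  have "(0, n) \<notin> pc D (1, n - 1) \<union> {(1, n)}" using f(6) ab_notin by auto
  hence ne2: "pc D (0, n - 1) \<union> {(0, n)} \<noteq> pc D (1, n - 1) \<union> {(1, n)}" by blast
  have "pat7 n (E7 n D)" unfolding pat7_def E7_def ext_def
    apply (rule bexI[of _ "pc D (0, n - 1) \<union> {(0, n)}"])
     apply (rule bexI[of _ "pc D (1, n - 1) \<union> {(1, n)}"])
    using f(2) f(4) ne ne2 by auto
  thus ?thesis using r r1 P s unfolding division_part E7_def
    by (simp add: board_Suc)
qed



lemma strip_F:
  assumes "F \<subseteq> D'" "\<forall>Q\<in>D' - F. Q \<subseteq> U \<and> Q \<noteq> {}"
  shows "strip U D' = strip U F \<union> (D' - F)"
proof -
  have "D' = F \<union> (D' - F)" using assms(1) by blast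
  hence "strip U D' = strip U F \<union> strip U (D' - F)" unfolding strip_def
    by (metis Un_Diff image_Un)
  thus ?thesis using strip_id[OF assms(2)] by simp
qed

lemma strip_single: "P \<inter> U \<noteq> {} \<Longrightarrow> strip U {P} = {P \<inter> U}"
  by (auto simp: strip_def)

lemma strip_single0: "P \<inter> U = {} \<Longrightarrow> strip U {P} = {}"
  by (auto simp: strip_def)

lemma strip_two: "strip U {P, Q} = strip U {P} \<union> strip U {Q}"
  by (auto simp: strip_def)

lemma ext_ins: "R \<notin> X \<Longrightarrow> ext (insert R X) R A = insert (R \<union> A) X"
  by (auto simp: ext_def)

lemma in_B: "part (board (Suc n)) D' \<Longrightarrow> Q \<in> D' \<Longrightarrow> (0, n) \<notin> Q \<Longrightarrow> (1, n) \<notin> Q \<Longrightarrow> Q \<subseteq> board n"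
  using part_sub[of "board (Suc n)" D' Q] by (auto simp: board_Suc)

lemma notin_rest: "part V D' \<Longrightarrow> P \<in> D' \<Longrightarrow> R \<subseteq> P \<Longrightarrow> R \<noteq> {} \<Longrightarrow> R \<notin> D' - {P}"
  using part_disj[of V D' P R] by blast

lemma Brest: "part (board (Suc n)) D' \<Longrightarrow> P \<in> D' \<Longrightarrow> P \<union> {(0, n), (1, n)} = P \<inter> board n \<union> {(0, n), (1, n)}"
  using part_sub[of "board (Suc n)" D' P] by (auto simp: board_Suc)

lemma bwd2:
  assumes n: "1 \<le> n" and D: "division (Suc n) k D'" and p: "pat2 n D'"
  shows "division n k (strip (board n) D') \<and> E2 n (strip (board n) D') = D'"
proof -
  let ?B = "board n"
  have PD: "part (board (Suc n)) D'" "card D' = k" using D by (auto simp: division_part)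
  obtain P where P: "P \<in> D'" "(0, n) \<in> P" "(1, n) \<in> P" "(0, n - 1) \<in> P" using p by (auto simp: pat2_def)
  have sub: "\<forall>Q\<in>D' - {P}. Q \<subseteq> ?B \<and> Q \<noteq> {}"
  proof
    fix Q assume Q: "Q \<in> D' - {P}"
    hence "Q \<inter> P = {}" using part_disj[OF PD(1)] P(1) by blast
    thus "Q \<subseteq> ?B \<and> Q \<noteq> {}" using in_B[OF PD(1)] Q P part_ne[OF PD(1)] by blast
  qed
  have x: "(0, n - 1) \<in> P \<inter> ?B" using P xy_in[OF n] by blast
  hence ne: "P \<inter> ?B \<noteq> {}" by blast
  define S where "S = strip ?B D'"
  have hS: "S = insert (P \<inter> ?B) (D' - {P})"
  proof -
    have FP: "{P} \<subseteq> D'" using P(1) by simp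
    show ?thesis unfolding S_def strip_F[OF FP sub] strip_single[OF ne] using P(1) by simp
  qed
  have pS: "part ?B S" unfolding S_def by (rule part_strip[OF n PD(1)])
  have pcS: "pc S (0, n - 1) = P \<inter> ?B" by (rule pc_eq[OF pS _ x]) (simp add: hS)
  have nr: "P \<inter> ?B \<notin> D' - {P}" by (rule notin_rest[OF PD(1) P(1) _ ne]) auto
  have e1: "P \<union> {(0, n), (1, n)} = P" using P(2,3) by blast
  have PP: "P \<inter> ?B \<union> {(0, n), (1, n)} = P" using Brest[OF PD(1) P(1)] e1 by metis
  have E: "E2 n S = D'"
    unfolding E2_def pcS using ext_ins[OF nr, of "{(0, n), (1, n)}"] PP P(1) hS by auto
  have "division n (card S) S" using pS by (simp add: division_part)
  from fwd2[OF n this] E PD(2) have "card S = k" by (auto simp: division_part)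
  thus ?thesis using pS E unfolding S_def[symmetric] by (simp add: division_part)
qed

lemma Brest_a: "part (board (Suc n)) D' \<Longrightarrow> P \<in> D' \<Longrightarrow> (0, n) \<in> P \<Longrightarrow> (1, n) \<notin> P \<Longrightarrow> P \<inter> board n \<union> {(0, n)} = P"
proof -
  assume a: "part (board (Suc n)) D'" "P \<in> D'" "(0, n) \<in> P" "(1, n) \<notin> P"
  have "P \<subseteq> board n \<union> {(0, n), (1, n)}" using part_sub[OF a(1,2)] by (simp add: board_Suc)
  thus ?thesis using a(3,4) by blast
qed

lemma Brest_b: "part (board (Suc n)) D' \<Longrightarrow> P \<in> D' \<Longrightarrow> (1, n) \<in> P \<Longrightarrow> (0, n) \<notin> P \<Longrightarrow> P \<inter> board n \<union> {(1, n)} = P"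
proof -
  assume a: "part (board (Suc n)) D'" "P \<in> D'" "(1, n) \<in> P" "(0, n) \<notin> P"
  have "P \<subseteq> board n \<union> {(0, n), (1, n)}" using part_sub[OF a(1,2)] by (simp add: board_Suc)
  thus ?thesis using a(3,4) by blast
qed

lemma bwd3:
  assumes n: "1 \<le> n" and D: "division (Suc n) k D'" and p: "pat3 n D'"
  shows "division n k (strip (board n) D') \<and> sepd n (strip (board n) D') \<and> E3 n (strip (board n) D') = D'"
proof -
  let ?B = "board n"
  have PD: "part (board (Suc n)) D'" "card D' = k" using D by (auto simp: division_part)
  obtain P where P: "P \<in> D'" "(0, n) \<in> P" "(1, n) \<in> P" "(1, n - 1) \<in> P" "(0, n - 1) \<notin> P"
    using p by (auto simp: pat3_def)
  have sub: "\<forall>Q\<in>D' - {P}. Q \<subseteq> ?B \<and> Q \<noteq> {}"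
  proof
    fix Q assume Q: "Q \<in> D' - {P}"
    hence "Q \<inter> P = {}" using part_disj[OF PD(1)] P(1) by blast
    thus "Q \<subseteq> ?B \<and> Q \<noteq> {}" using in_B[OF PD(1)] Q P part_ne[OF PD(1)] by blast
  qed
  have y: "(1, n - 1) \<in> P \<inter> ?B" using P xy_in[OF n] by blast
  hence ne: "P \<inter> ?B \<noteq> {}" by blast
  define S where "S = strip ?B D'"
  have hS: "S = insert (P \<inter> ?B) (D' - {P})"
  proof -
    have FP: "{P} \<subseteq> D'" using P(1) by simp
    show ?thesis unfolding S_def strip_F[OF FP sub] strip_single[OF ne] using P(1) by simp
  qed
  have pS: "part ?B S" unfolding S_def by (rule part_strip[OF n PD(1)])
  have pcS: "pc S (1, n - 1) = P \<inter> ?B" by (rule pc_eq[OF pS _ y]) (simp add: hS)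
  have "(0, n - 1) \<in> pc S (0, n - 1)" using pc_in[OF pS xy_in(1)[OF n]] by simp
  hence sp: "sepd n S" unfolding sepd_def pcS using P(5) by blast
  have nr: "P \<inter> ?B \<notin> D' - {P}" by (rule notin_rest[OF PD(1) P(1) _ ne]) auto
  have e1: "P \<union> {(0, n), (1, n)} = P" using P(2,3) by blast
  have PP: "P \<inter> ?B \<union> {(0, n), (1, n)} = P" using Brest[OF PD(1) P(1)] e1 by metis
  have E: "E3 n S = D'"
    unfolding E3_def pcS using ext_ins[OF nr, of "{(0, n), (1, n)}"] PP P(1) hS by auto
  have "division n (card S) S" using pS by (simp add: division_part)
  from fwd3[OF n this sp] E PD(2) have "card S = k" by (auto simp: division_part)
  thus ?thesis using pS E sp unfolding S_def[symmetric] by (simp add: division_part)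
qed

lemma bwd1:
  assumes n: "1 \<le> n" and D: "division (Suc n) (Suc m) D'" and p: "pat1 n D'"
  shows "division n m (strip (board n) D') \<and> E1 n (strip (board n) D') = D'"
proof -
  let ?B = "board n"
  let ?A = "{(0, n), (1, n)}"
  have PD: "part (board (Suc n)) D'" "card D' = Suc m" using D by (auto simp: division_part)
  have P: "?A \<in> D'" using p by (simp add: pat1_def)
  have sub: "\<forall>Q\<in>D' - {?A}. Q \<subseteq> ?B \<and> Q \<noteq> {}"
  proof
    fix Q assume Q: "Q \<in> D' - {?A}"
    hence "Q \<inter> ?A = {}" using part_disj[OF PD(1)] P by blast
    thus "Q \<subseteq> ?B \<and> Q \<noteq> {}" using in_B[OF PD(1)] Q P part_ne[OF PD(1)] by blast
  qed
  define S where "S = strip ?B D'"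
  have hS: "S = D' - {?A}"
  proof -
    have FP: "{?A} \<subseteq> D'" using P by simp
    have z: "?A \<inter> ?B = {}" by (rule dj1(1))
    show ?thesis unfolding S_def strip_F[OF FP sub] strip_single0[OF z] by simp
  qed
  have pS: "part ?B S" unfolding S_def by (rule part_strip[OF n PD(1)])
  have E: "E1 n S = D'" unfolding E1_def hS using P by blast
  have "division n (card S) S" using pS by (simp add: division_part)
  from fwd1[OF n this] E PD(2) have "card S = m" by (auto simp: division_part)
  thus ?thesis using pS E unfolding S_def[symmetric] by (simp add: division_part)
qed

lemma bwd4:
  assumes n: "1 \<le> n" and D: "division (Suc n) (Suc (Suc m)) D'" and p: "pat4 n D'"
  shows "division n m (strip (board n) D') \<and> E4 n (strip (board n) D') = D'"
proof -
  let ?B = "board n"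
  have PD: "part (board (Suc n)) D'" "card D' = Suc (Suc m)" using D by (auto simp: division_part)
  have P: "{(0, n)} \<in> D'" "{(1, n)} \<in> D'" using p by (auto simp: pat4_def)
  have sub: "\<forall>Q\<in>D' - {{(0, n)}, {(1, n)}}. Q \<subseteq> ?B \<and> Q \<noteq> {}"
  proof
    fix Q assume Q: "Q \<in> D' - {{(0, n)}, {(1, n)}}"
    hence "Q \<inter> {(0, n)} = {}" "Q \<inter> {(1, n)} = {}" using part_disj[OF PD(1)] P by blast+
    thus "Q \<subseteq> ?B \<and> Q \<noteq> {}" using in_B[OF PD(1)] Q P part_ne[OF PD(1)] by blast
  qed
  define S where "S = strip ?B D'"
  have hS: "S = D' - {{(0, n)}, {(1, n)}}"
  proof -
    have FP: "{{(0, n)}, {(1, n)}} \<subseteq> D'" using P by simp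
    show ?thesis unfolding S_def strip_F[OF FP sub] strip_two strip_single0[OF dj1(2)] strip_single0[OF dj1(3)] by simp
  qed
  have pS: "part ?B S" unfolding S_def by (rule part_strip[OF n PD(1)])
  have E: "E4 n S = D'" unfolding E4_def hS using P by blast
  have "division n (card S) S" using pS by (simp add: division_part)
  from fwd4[OF n this] E PD(2) have "card S = m" by (auto simp: division_part)
  thus ?thesis using pS E unfolding S_def[symmetric] by (simp add: division_part)
qed

lemma bwd5:
  assumes n: "1 \<le> n" and D: "division (Suc n) (Suc m) D'" and p: "pat5 n D'"
  shows "division n m (strip (board n) D') \<and> E5 n (strip (board n) D') = D'"
proof -
  let ?B = "board n"
  have PD: "part (board (Suc n)) D'" "card D' = Suc m" using D by (auto simp: division_part)
  obtain P where P: "{(1, n)} \<in> D'" "P \<in> D'" "(0, n) \<in> P" "(0, n - 1) \<in> P"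
    using p by (auto simp: pat5_def)
  have Pne: "P \<noteq> {(1, n)}" using P(3) by auto
  hence bP: "(1, n) \<notin> P" using part_disj[OF PD(1) P(2) P(1)] by blast
  let ?F = "{P, {(1, n)}}"
  have sub: "\<forall>Q\<in>D' - ?F. Q \<subseteq> ?B \<and> Q \<noteq> {}"
  proof
    fix Q assume Q: "Q \<in> D' - ?F"
    hence "Q \<inter> P = {}" "Q \<inter> {(1, n)} = {}" using part_disj[OF PD(1)] P by blast+
    thus "Q \<subseteq> ?B \<and> Q \<noteq> {}" using in_B[OF PD(1)] Q P part_ne[OF PD(1)] by blast
  qed
  have x: "(0, n - 1) \<in> P \<inter> ?B" using P xy_in[OF n] by blast
  hence ne: "P \<inter> ?B \<noteq> {}" by blast
  define S where "S = strip ?B D'"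
  define X where "X = D' - ?F"
  have hS: "S = insert (P \<inter> ?B) X"
  proof -
    have FP: "?F \<subseteq> D'" using P by simp
    show ?thesis unfolding S_def X_def strip_F[OF FP sub] strip_two strip_single[OF ne] strip_single0[OF dj1(3)] by simp
  qed
  have pS: "part ?B S" unfolding S_def by (rule part_strip[OF n PD(1)])
  have pcS: "pc S (0, n - 1) = P \<inter> ?B" by (rule pc_eq[OF pS _ x]) (simp add: hS)
  have nr: "P \<inter> ?B \<notin> D' - {P}" by (rule notin_rest[OF PD(1) P(2) _ ne]) auto
  have nb: "P \<inter> ?B \<noteq> {(1, n)}" using ab_notin(2) by blast
  have nr2: "P \<inter> ?B \<notin> insert {(1, n)} X" using nr nb unfolding X_def by blast
  have PP: "P \<inter> ?B \<union> {(0, n)} = P" by (rule Brest_a[OF PD(1) P(2,3) bP])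
  have "E5 n S = ext (insert (P \<inter> ?B) (insert {(1, n)} X)) (P \<inter> ?B) {(0, n)}"
  proof -
    have "insert {(1, n)} (insert (P \<inter> ?B) X) = insert (P \<inter> ?B) (insert {(1, n)} X)" by blast
    thus ?thesis unfolding E5_def pcS unfolding hS by simp
  qed
  also have "\<dots> = insert P (insert {(1, n)} X)" unfolding ext_ins[OF nr2] PP ..
  also have "\<dots> = D'" unfolding X_def using P by blast
  finally have E: "E5 n S = D'" .
  have "division n (card S) S" using pS by (simp add: division_part)
  from fwd5[OF n this] E PD(2) have "card S = m" by (auto simp: division_part)
  thus ?thesis using pS E unfolding S_def[symmetric] by (simp add: division_part)
qed

lemma bwd6:
  assumes n: "1 \<le> n" and D: "division (Suc n) (Suc m) D'" and p: "pat6 n D'"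
  shows "division n m (strip (board n) D') \<and> E6 n (strip (board n) D') = D'"
proof -
  let ?B = "board n"
  have PD: "part (board (Suc n)) D'" "card D' = Suc m" using D by (auto simp: division_part)
  obtain P where P: "{(0, n)} \<in> D'" "P \<in> D'" "(1, n) \<in> P" "(1, n - 1) \<in> P"
    using p by (auto simp: pat6_def)
  have Pne: "P \<noteq> {(0, n)}" using P(3) by auto
  hence aP: "(0, n) \<notin> P" using part_disj[OF PD(1) P(2) P(1)] by blast
  let ?F = "{{(0, n)}, P}"
  have sub: "\<forall>Q\<in>D' - ?F. Q \<subseteq> ?B \<and> Q \<noteq> {}"
  proof
    fix Q assume Q: "Q \<in> D' - ?F"
    hence "Q \<inter> P = {}" "Q \<inter> {(0, n)} = {}" using part_disj[OF PD(1)] P by blast+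
    thus "Q \<subseteq> ?B \<and> Q \<noteq> {}" using in_B[OF PD(1)] Q P part_ne[OF PD(1)] by blast
  qed
  have y: "(1, n - 1) \<in> P \<inter> ?B" using P xy_in[OF n] by blast
  hence ne: "P \<inter> ?B \<noteq> {}" by blast
  define S where "S = strip ?B D'"
  define X where "X = D' - ?F"
  have hS: "S = insert (P \<inter> ?B) X"
  proof -
    have FP: "?F \<subseteq> D'" using P by simp
    show ?thesis unfolding S_def X_def strip_F[OF FP sub] strip_two strip_single[OF ne] strip_single0[OF dj1(2)] by simp
  qed
  have pS: "part ?B S" unfolding S_def by (rule part_strip[OF n PD(1)])
  have pcS: "pc S (1, n - 1) = P \<inter> ?B" by (rule pc_eq[OF pS _ y]) (simp add: hS)
  have nr: "P \<inter> ?B \<notin> D' - {P}" by (rule notin_rest[OF PD(1) P(2) _ ne]) auto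
  have nr2: "P \<inter> ?B \<notin> X" using nr unfolding X_def by blast
  have PP: "P \<inter> ?B \<union> {(1, n)} = P" by (rule Brest_b[OF PD(1) P(2,3) aP])
  have "E6 n S = insert {(0, n)} (ext (insert (P \<inter> ?B) X) (P \<inter> ?B) {(1, n)})"
    unfolding E6_def pcS unfolding hS ..
  also have "\<dots> = insert {(0, n)} (insert P X)" unfolding ext_ins[OF nr2] PP ..
  also have "\<dots> = D'" unfolding X_def using P by blast
  finally have E: "E6 n S = D'" .
  have "division n (card S) S" using pS by (simp add: division_part)
  from fwd6[OF n this] E PD(2) have "card S = m" by (auto simp: division_part)
  thus ?thesis using pS E unfolding S_def[symmetric] by (simp add: division_part)
qed

lemma bwd7:
  assumes n: "1 \<le> n" and D: "division (Suc n) m D'" and p: "pat7 n D'"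
  shows "division n m (strip (board n) D') \<and> sepd n (strip (board n) D') \<and> E7 n (strip (board n) D') = D'"
proof -
  let ?B = "board n"
  have PD: "part (board (Suc n)) D'" "card D' = m" using D by (auto simp: division_part)
  obtain P Q where P: "P \<in> D'" "Q \<in> D'" "(0, n) \<in> P" "(0, n - 1) \<in> P" "(1, n) \<in> Q" "(1, n - 1) \<in> Q" "P \<noteq> Q"
    using p unfolding pat7_def by blast
  have PQ: "P \<inter> Q = {}" using part_disj[OF PD(1) P(1,2) P(7)] .
  hence bP: "(1, n) \<notin> P" and aQ: "(0, n) \<notin> Q" using P by blast+
  let ?F = "{P, Q}"
  have sub: "\<forall>R\<in>D' - ?F. R \<subseteq> ?B \<and> R \<noteq> {}"
  proof
    fix R assume R: "R \<in> D' - ?F"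
    hence "R \<inter> P = {}" "R \<inter> Q = {}" using part_disj[OF PD(1)] P by blast+
    thus "R \<subseteq> ?B \<and> R \<noteq> {}" using in_B[OF PD(1)] R P part_ne[OF PD(1)] by blast
  qed
  have x: "(0, n - 1) \<in> P \<inter> ?B" using P xy_in[OF n] by blast
  hence ne: "P \<inter> ?B \<noteq> {}" by blast
  have y: "(1, n - 1) \<in> Q \<inter> ?B" using P xy_in[OF n] by blast
  hence neQ: "Q \<inter> ?B \<noteq> {}" by blast
  define S where "S = strip ?B D'"
  define X where "X = D' - ?F"
  have hS: "S = insert (P \<inter> ?B) (insert (Q \<inter> ?B) X)"
  proof -
    have FP: "?F \<subseteq> D'" using P by simp
    show ?thesis unfolding S_def X_def strip_F[OF FP sub] strip_two strip_single[OF ne] strip_single[OF neQ] by blast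
  qed
  have pS: "part ?B S" unfolding S_def by (rule part_strip[OF n PD(1)])
  have pcS: "pc S (0, n - 1) = P \<inter> ?B" by (rule pc_eq[OF pS _ x]) (simp add: hS)
  have pcSQ: "pc S (1, n - 1) = Q \<inter> ?B" by (rule pc_eq[OF pS _ y]) (simp add: hS)
  have sp: "sepd n S" unfolding sepd_def pcS pcSQ using PQ x by blast
  have nrP: "P \<inter> ?B \<notin> D' - {P}" by (rule notin_rest[OF PD(1) P(1) _ ne]) auto
  have nrQ: "Q \<inter> ?B \<notin> D' - {Q}" by (rule notin_rest[OF PD(1) P(2) _ neQ]) auto
  have n1: "Q \<inter> ?B \<notin> insert (P \<inter> ?B) X" using nrQ PQ y unfolding X_def by blast
  have n2: "P \<inter> ?B \<notin> insert Q X" using nrP PQ x unfolding X_def by blast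
  have PP: "P \<inter> ?B \<union> {(0, n)} = P" by (rule Brest_a[OF PD(1) P(1,3) bP])
  have QQ: "Q \<inter> ?B \<union> {(1, n)} = Q" by (rule Brest_b[OF PD(1) P(2,5) aQ])
  have "E7 n S = ext (ext (insert (Q \<inter> ?B) (insert (P \<inter> ?B) X)) (Q \<inter> ?B) {(1, n)}) (P \<inter> ?B) {(0, n)}"
  proof -
    have "insert (P \<inter> ?B) (insert (Q \<inter> ?B) X) = insert (Q \<inter> ?B) (insert (P \<inter> ?B) X)" by blast
    thus ?thesis unfolding E7_def pcS pcSQ unfolding hS by simp
  qed
  also have "\<dots> = ext (insert (P \<inter> ?B) (insert Q X)) (P \<inter> ?B) {(0, n)}"
  proof -
    have "insert Q (insert (P \<inter> ?B) X) = insert (P \<inter> ?B) (insert Q X)" by blast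
    thus ?thesis unfolding ext_ins[OF n1] QQ by simp
  qed
  also have "\<dots> = insert P (insert Q X)" unfolding ext_ins[OF n2] PP ..
  also have "\<dots> = D'" unfolding X_def using P by blast
  finally have E: "E7 n S = D'" .
  have "division n (card S) S" using pS by (simp add: division_part)
  from fwd7[OF n this sp] E PD(2) have "card S = m" by (auto simp: division_part)
  thus ?thesis using pS E sp unfolding S_def[symmetric] by (simp add: division_part)
qed



lemma cnt1: "1 \<le> n \<Longrightarrow> card {D'. division (Suc n) (Suc m) D' \<and> pat1 n D'} = card {D. division n m D}"
  by (rule bij_betw_same_card[symmetric], rule bij_betw_byWitness[where f'="strip (board n)"])
     (use fwd1 bwd1 in auto)
lemma cnt2: "1 \<le> n \<Longrightarrow> card {D'. division (Suc n) m D' \<and> pat2 n D'} = card {D. division n m D}"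
  by (rule bij_betw_same_card[symmetric], rule bij_betw_byWitness[where f'="strip (board n)"])
     (use fwd2 bwd2 in auto)
lemma cnt3: "1 \<le> n \<Longrightarrow> card {D'. division (Suc n) m D' \<and> pat3 n D'} = card {D. division n m D \<and> sepd n D}"
  by (rule bij_betw_same_card[symmetric], rule bij_betw_byWitness[where f'="strip (board n)"])
     (use fwd3 bwd3 in auto)
lemma cnt4: "1 \<le> n \<Longrightarrow> card {D'. division (Suc n) (Suc (Suc m)) D' \<and> pat4 n D'} = card {D. division n m D}"
  by (rule bij_betw_same_card[symmetric], rule bij_betw_byWitness[where f'="strip (board n)"])
     (use fwd4 bwd4 in auto)
lemma cnt5: "1 \<le> n \<Longrightarrow> card {D'. division (Suc n) (Suc m) D' \<and> pat5 n D'} = card {D. division n m D}"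
  by (rule bij_betw_same_card[symmetric], rule bij_betw_byWitness[where f'="strip (board n)"])
     (use fwd5 bwd5 in auto)
lemma cnt6: "1 \<le> n \<Longrightarrow> card {D'. division (Suc n) (Suc m) D' \<and> pat6 n D'} = card {D. division n m D}"
  by (rule bij_betw_same_card[symmetric], rule bij_betw_byWitness[where f'="strip (board n)"])
     (use fwd6 bwd6 in auto)
lemma cnt7: "1 \<le> n \<Longrightarrow> card {D'. division (Suc n) m D' \<and> pat7 n D'} = card {D. division n m D \<and> sepd n D}"
  by (rule bij_betw_same_card[symmetric], rule bij_betw_byWitness[where f'="strip (board n)"])
     (use fwd7 bwd7 in auto)



lemma classify_joined:
  assumes n: "1 \<le> n" and D: "part (board (Suc n)) D'" and P: "P \<in> D'" "(0, n) \<in> P" "(1, n) \<in> P"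
  shows "P = {(0, n), (1, n)} \<or> (0, n - 1) \<in> P \<or> (1, n - 1) \<in> P"
proof (cases "P \<subseteq> {(0, n), (1, n)}")
  case True thus ?thesis using P by blast
next
  case False
  then obtain w where w: "w \<in> P" "w \<notin> {(0, n), (1, n)}" by blast
  have "connected_sq P" using D P(1) by (auto simp: part_def piece_def)
  hence "((0, n), w) \<in> (edg P)\<^sup>*" using P(2) w(1) by (auto simp: conn_def2)
  from crossing[OF this, of "{(0, n), (1, n)}"] w obtain s t where
    st: "(s, t) \<in> edg P" "s \<in> {(0, n), (1, n)}" "t \<notin> {(0, n), (1, n)}" by auto
  have t: "t \<in> board (Suc n)" "t \<in> P" "adj s t" using st(1) part_sub[OF D P(1)] by (auto simp: edg_def)
  show ?thesis using st(2,3) t adj_a2[of t n] adj_b2[of t n] by auto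
qed

lemma classify_a:
  assumes n: "1 \<le> n" and D: "part (board (Suc n)) D'" and P: "P \<in> D'" "(0, n) \<in> P" "(1, n) \<notin> P"
  shows "P = {(0, n)} \<or> (0, n - 1) \<in> P"
proof (cases "P \<subseteq> {(0, n)}")
  case True thus ?thesis using P by blast
next
  case False
  then obtain w where w: "w \<in> P" "w \<notin> {(0, n)}" by blast
  have "connected_sq P" using D P(1) by (auto simp: part_def piece_def)
  hence "((0, n), w) \<in> (edg P)\<^sup>*" using P(2) w(1) by (auto simp: conn_def2)
  from crossing[OF this, of "{(0, n)}"] w obtain s t where
    st: "(s, t) \<in> edg P" "s \<in> {(0, n)}" "t \<notin> {(0, n)}" by auto
  have t: "t \<in> board (Suc n)" "t \<in> P" "adj s t" using st(1) part_sub[OF D P(1)] by (auto simp: edg_def)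
  show ?thesis using st(2,3) t adj_a2[of t n] P(3) by auto
qed

lemma classify_b:
  assumes n: "1 \<le> n" and D: "part (board (Suc n)) D'" and P: "P \<in> D'" "(1, n) \<in> P" "(0, n) \<notin> P"
  shows "P = {(1, n)} \<or> (1, n - 1) \<in> P"
proof (cases "P \<subseteq> {(1, n)}")
  case True thus ?thesis using P by blast
next
  case False
  then obtain w where w: "w \<in> P" "w \<notin> {(1, n)}" by blast
  have "connected_sq P" using D P(1) by (auto simp: part_def piece_def)
  hence "((1, n), w) \<in> (edg P)\<^sup>*" using P(2) w(1) by (auto simp: conn_def2)
  from crossing[OF this, of "{(1, n)}"] w obtain s t where
    st: "(s, t) \<in> edg P" "s \<in> {(1, n)}" "t \<notin> {(1, n)}" by auto
  have t: "t \<in> board (Suc n)" "t \<in> P" "adj s t" using st(1) part_sub[OF D P(1)] by (auto simp: edg_def)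
  show ?thesis using st(2,3) t adj_b2[of t n] P(3) by auto
qed

definition "joined n D' \<longleftrightarrow> (\<exists>P\<in>D'. (0, n) \<in> P \<and> (1, n) \<in> P)"

lemma uniq: "part U D' \<Longrightarrow> R1 \<in> D' \<Longrightarrow> R2 \<in> D' \<Longrightarrow> z \<in> R1 \<Longrightarrow> z \<in> R2 \<Longrightarrow> R1 = R2"
  using part_disj by blast

lemma pts_ne: "1 \<le> (n::nat) \<Longrightarrow> (0::nat, n - 1) \<noteq> (0, n) \<and> (0::nat, n - 1) \<noteq> (1, n) \<and> (1::nat, n - 1) \<noteq> (0, n) \<and> (1::nat, n - 1) \<noteq> (1, n) \<and> (0::nat, n) \<noteq> (1, n)"
  by auto

lemma classify:
  assumes n: "1 \<le> n" and D: "part (board (Suc n)) D'"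
  shows "joined n D' \<longleftrightarrow> pat1 n D' \<or> pat2 n D' \<or> pat3 n D'"
    "\<not> joined n D' \<longleftrightarrow> pat4 n D' \<or> pat5 n D' \<or> pat6 n D' \<or> pat7 n D'"
    "\<not> (pat1 n D' \<and> pat2 n D')" "\<not> (pat1 n D' \<and> pat3 n D')" "\<not> (pat2 n D' \<and> pat3 n D')"
    "\<not> (pat4 n D' \<and> pat5 n D')" "\<not> (pat4 n D' \<and> pat6 n D')" "\<not> (pat4 n D' \<and> pat7 n D')"
    "\<not> (pat5 n D' \<and> pat6 n D')" "\<not> (pat5 n D' \<and> pat7 n D')" "\<not> (pat6 n D' \<and> pat7 n D')"
proof -
  note u = uniq[OF D]
  note ne = pts_ne[OF n]
  show "\<not> (pat1 n D' \<and> pat2 n D')" unfolding pat1_def pat2_def using u ne by blast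
  show "\<not> (pat1 n D' \<and> pat3 n D')" unfolding pat1_def pat3_def using u ne by blast
  show "\<not> (pat2 n D' \<and> pat3 n D')" unfolding pat2_def pat3_def using u ne by metis
  show "\<not> (pat4 n D' \<and> pat5 n D')" unfolding pat4_def pat5_def using u ne by blast
  show "\<not> (pat4 n D' \<and> pat6 n D')" unfolding pat4_def pat6_def using u ne by blast
  show "\<not> (pat4 n D' \<and> pat7 n D')" unfolding pat4_def pat7_def using u ne by blast
  show "\<not> (pat5 n D' \<and> pat6 n D')" unfolding pat5_def pat6_def using u ne by blast
  show "\<not> (pat5 n D' \<and> pat7 n D')" unfolding pat5_def pat7_def using u ne by blast
  show "\<not> (pat6 n D' \<and> pat7 n D')" unfolding pat6_def pat7_def using u ne by blast
  have j1: "joined n D' \<Longrightarrow> pat1 n D' \<or> pat2 n D' \<or> pat3 n D'"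
  proof -
    assume "joined n D'"
    then obtain P where P: "P \<in> D'" "(0, n) \<in> P" "(1, n) \<in> P" by (auto simp: joined_def)
    show ?thesis using classify_joined[OF n D P] P unfolding pat1_def pat2_def pat3_def by metis
  qed
  have j2: "pat1 n D' \<or> pat2 n D' \<or> pat3 n D' \<Longrightarrow> joined n D'"
    unfolding pat1_def pat2_def pat3_def joined_def by blast
  show "joined n D' \<longleftrightarrow> pat1 n D' \<or> pat2 n D' \<or> pat3 n D'" using j1 j2 by blast
  have j3: "\<not> joined n D' \<Longrightarrow> pat4 n D' \<or> pat5 n D' \<or> pat6 n D' \<or> pat7 n D'"
  proof -
    assume nj: "\<not> joined n D'"
    have a: "(0, n) \<in> board (Suc n)" "(1, n) \<in> board (Suc n)" by (auto simp: board_def)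
    obtain P where P: "P \<in> D'" "(0, n) \<in> P" using pc_in[OF D a(1)] by blast
    obtain Q where Q: "Q \<in> D'" "(1, n) \<in> Q" using pc_in[OF D a(2)] by blast
    have bP: "(1, n) \<notin> P" using nj P unfolding joined_def by blast
    have aQ: "(0, n) \<notin> Q" using nj Q unfolding joined_def by blast
    have PQ: "P \<noteq> Q" using P(2) aQ by blast
    show ?thesis using classify_a[OF n D P bP] classify_b[OF n D Q aQ] P Q PQ
      unfolding pat4_def pat5_def pat6_def pat7_def by metis
  qed
  have j4: "pat4 n D' \<or> pat5 n D' \<or> pat6 n D' \<or> pat7 n D' \<Longrightarrow> \<not> joined n D'"
    unfolding pat4_def pat5_def pat6_def pat7_def joined_def using u ne by blast
  show "\<not> joined n D' \<longleftrightarrow> pat4 n D' \<or> pat5 n D' \<or> pat6 n D' \<or> pat7 n D'" using j3 j4 by blast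
qed



lemma board_eq: "board n = {0..<2} \<times> {0..<n}" by (auto simp: board_def)

lemma fin_div: "finite {D. division n k D}"
proof -
  have "{D. division n k D} \<subseteq> Pow (Pow (board n))" by (auto simp: division_def)
  moreover have "finite (Pow (Pow (board n)))" by (simp add: board_eq)
  ultimately show ?thesis by (rule finite_subset)
qed

lemma fin_sub: "finite {D. division n k D \<and> Q D}"
  by (rule finite_subset[OF _ fin_div]) auto

lemma sepd_iff: assumes n: "1 \<le> n" and D: "division n k D"
  shows "sepd n D \<longleftrightarrow> (\<forall>P\<in>D. \<not> ((0, n - 1) \<in> P \<and> (1, n - 1) \<in> P))"
proof -
  have p: "part (board n) D" using D by (simp add: division_part)
  note f = setup_facts[OF n p]
  show ?thesis
  proof
    assume "sepd n D"
    thus "\<forall>P\<in>D. \<not> ((0, n - 1) \<in> P \<and> (1, n - 1) \<in> P)"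
      unfolding sepd_def using pc_eq[OF p] by metis
  next
    assume "\<forall>P\<in>D. \<not> ((0, n - 1) \<in> P \<and> (1, n - 1) \<in> P)"
    thus "sepd n D" unfolding sepd_def using f(1,2,4) by metis
  qed
qed

lemma s_sepd: assumes n: "1 \<le> n" shows "s k n = card {D. division n k D \<and> sepd n D}"
proof -
  have "{D. division n k D \<and> (\<forall>P\<in>D. \<not> ((0, n - 1) \<in> P \<and> (1, n - 1) \<in> P))} = {D. division n k D \<and> sepd n D}"
    using sepd_iff[OF n] by blast
  thus ?thesis unfolding s_def by simp
qed

lemma s_Suc: "s k (Suc n) = card {D'. division (Suc n) k D' \<and> \<not> joined n D'}"
  unfolding s_def joined_def by simp

lemma card3: assumes "finite A" "finite B" "finite C"
  "A \<inter> B = {}" "A \<inter> C = {}" "B \<inter> C = {}"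
  shows "card (A \<union> B \<union> C) = card A + card B + card C"
proof -
  have "card (A \<union> B) = card A + card B" by (rule card_Un_disjoint) (use assms in auto)
  moreover have "card (A \<union> B \<union> C) = card (A \<union> B) + card C" by (rule card_Un_disjoint) (use assms in auto)
  ultimately show ?thesis by simp
qed

lemma card4: assumes "finite A" "finite B" "finite C" "finite E"
  "A \<inter> B = {}" "A \<inter> C = {}" "A \<inter> E = {}" "B \<inter> C = {}" "B \<inter> E = {}" "C \<inter> E = {}"
  shows "card (A \<union> B \<union> C \<union> E) = card A + card B + card C + card E"
proof -
  have "card (A \<union> B \<union> C) = card A + card B + card C" by (rule card3) (use assms in auto)
  moreover have "card (A \<union> B \<union> C \<union> E) = card (A \<union> B \<union> C) + card E" by (rule card_Un_disjoint) (use assms in auto)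
  ultimately show ?thesis by simp
qed

lemma Cdisj: "(\<And>D'. division m k D' \<Longrightarrow> \<not> (p D' \<and> q D')) \<Longrightarrow>
  {D'. division m k D' \<and> p D'} \<inter> {D'. division m k D' \<and> q D'} = {}"
  by blast

lemma srec: assumes n: "1 \<le> n"
  shows "s (Suc (Suc m)) (Suc n) = d m n + 2 * d (Suc m) n + s (Suc (Suc m)) n"
proof -
  let ?k = "Suc (Suc m)"
  let ?C = "\<lambda>p. {D'. division (Suc n) ?k D' \<and> p n D'}"
  have cl: "\<And>D'. division (Suc n) ?k D' \<Longrightarrow> part (board (Suc n)) D'" by (simp add: division_part)
  have eq: "{D'. division (Suc n) ?k D' \<and> \<not> joined n D'} = ?C pat4 \<union> ?C pat5 \<union> ?C pat6 \<union> ?C pat7"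
  proof -
    have "\<And>D'. division (Suc n) ?k D' \<Longrightarrow> (\<not> joined n D') = (pat4 n D' \<or> pat5 n D' \<or> pat6 n D' \<or> pat7 n D')"
      using classify(2)[OF n cl] by blast
    thus ?thesis by blast
  qed
  have "card (?C pat4 \<union> ?C pat5 \<union> ?C pat6 \<union> ?C pat7) = card (?C pat4) + card (?C pat5) + card (?C pat6) + card (?C pat7)"
    apply (rule card4)
    apply (rule fin_sub)+
    apply (rule Cdisj, rule classify[OF n cl], assumption)+
    done
  moreover have "card (?C pat4) = d m n" unfolding d_def by (rule cnt4[OF n])
  moreover have "card (?C pat5) = d (Suc m) n" unfolding d_def by (rule cnt5[OF n])
  moreover have "card (?C pat6) = d (Suc m) n" unfolding d_def by (rule cnt6[OF n])
  moreover have "card (?C pat7) = s ?k n" unfolding s_sepd[OF n] by (rule cnt7[OF n])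
  ultimately show ?thesis unfolding s_Suc eq by simp
qed

lemma d_split: "d k (Suc n) = card {D'. division (Suc n) k D' \<and> joined n D'} + s k (Suc n)"
proof -
  have e: "{D'. division (Suc n) k D'} = {D'. division (Suc n) k D' \<and> joined n D'} \<union> {D'. division (Suc n) k D' \<and> \<not> joined n D'}"
    by blast
  have "d k (Suc n) = card ({D'. division (Suc n) k D' \<and> joined n D'} \<union> {D'. division (Suc n) k D' \<and> \<not> joined n D'})"
    unfolding d_def by (rule arg_cong[where f=card, OF e])
  also have "\<dots> = card {D'. division (Suc n) k D' \<and> joined n D'} + card {D'. division (Suc n) k D' \<and> \<not> joined n D'}"
    by (rule card_Un_disjoint) (use fin_sub in auto)
  finally show ?thesis unfolding s_Suc .
qed

lemma drec: assumes n: "1 \<le> n"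
  shows "d (Suc (Suc m)) (Suc n) = d (Suc m) n + d (Suc (Suc m)) n + s (Suc (Suc m)) n + s (Suc (Suc m)) (Suc n)"
proof -
  let ?k = "Suc (Suc m)"
  let ?C = "\<lambda>p. {D'. division (Suc n) ?k D' \<and> p n D'}"
  have cl: "\<And>D'. division (Suc n) ?k D' \<Longrightarrow> part (board (Suc n)) D'" by (simp add: division_part)
  have eq: "{D'. division (Suc n) ?k D' \<and> joined n D'} = ?C pat1 \<union> ?C pat2 \<union> ?C pat3"
  proof -
    have "\<And>D'. division (Suc n) ?k D' \<Longrightarrow> (joined n D') = (pat1 n D' \<or> pat2 n D' \<or> pat3 n D')"
      using classify(1)[OF n cl] by blast
    thus ?thesis by blast
  qed
  have "card (?C pat1 \<union> ?C pat2 \<union> ?C pat3) = card (?C pat1) + card (?C pat2) + card (?C pat3)"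
    apply (rule card3)
    apply (rule fin_sub)+
    apply (rule Cdisj, rule classify[OF n cl], assumption)+
    done
  moreover have "card (?C pat1) = d (Suc m) n" unfolding d_def by (rule cnt1[OF n])
  moreover have "card (?C pat2) = d ?k n" unfolding d_def by (rule cnt2[OF n])
  moreover have "card (?C pat3) = s ?k n" unfolding s_sepd[OF n] by (rule cnt3[OF n])
  ultimately show ?thesis unfolding d_split eq by simp
qed



lemma board_conn: "1 \<le> n \<Longrightarrow> connected_sq (board n)"
proof (induction n rule: nat_induct_at_least)
  case base
  have "board 1 = {(0, 0), (1, 0)}" by (auto simp: board_def)
  thus ?case using conn_ab[of 0] by simp
next
  case (Suc n)
  have "connected_sq (board n \<union> {(0, n), (1, n)})"
    by (rule conn_union[OF Suc.IH conn_ab xy_in(1)[OF Suc.hyps] _ adj_facts(2)[OF Suc.hyps]]) simp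
  thus ?case by (simp add: board_Suc)
qed

lemma board_ne: "1 \<le> n \<Longrightarrow> board n \<noteq> {}"
  using xy_in(1) by blast

lemma div1: assumes n: "1 \<le> n" shows "division n 1 D \<longleftrightarrow> D = {board n}"
proof
  assume D: "division n 1 D"
  then obtain P where "D = {P}" by (auto simp: division_def card_1_singleton_iff)
  thus "D = {board n}" using D by (auto simp: division_def)
next
  assume "D = {board n}"
  thus "division n 1 D" using board_conn[OF n] board_ne[OF n] by (auto simp: division_def piece_def)
qed

lemma d1: assumes n: "1 \<le> n" shows "d 1 n = 1"
proof -
  have e: "{D. division n 1 D} = {{board n}}" using div1[OF n] by auto
  show ?thesis unfolding d_def e by simp
qed

lemma s1: assumes n: "1 \<le> n" shows "s 1 n = 0"
proof -
  have e: "{D. division n 1 D \<and> (\<forall>P\<in>D. \<not> ((0, n - 1) \<in> P \<and> (1, n - 1) \<in> P))} = {}"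
    using div1[OF n] xy_in[OF n] by auto
  thus ?thesis unfolding s_def by (simp only: e card.empty)
qed

lemma d0: assumes n: "1 \<le> n" shows "d 0 n = 0"
proof -
  have e: "{D. division n 0 D} = {}"
    using board_ne[OF n] by (auto simp: division_def)
  thus ?thesis unfolding d_def by (simp only: e card.empty)
qed

lemma card_bound: assumes "division n k D" shows "k \<le> card (board n)"
proof -
  let ?f = "\<lambda>P. SOME z. z \<in> P"
  have p: "part (board n) D" "card D = k" using assms by (auto simp: division_part)
  have mem: "\<And>P. P \<in> D \<Longrightarrow> ?f P \<in> P" using part_ne[OF p(1)] by (simp add: some_in_eq)
  have "inj_on ?f D"
  proof
    fix P Q assume PQ: "P \<in> D" "Q \<in> D" "?f P = ?f Q"
    show "P = Q"
    proof (rule ccontr)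
      assume "P \<noteq> Q"
      hence "P \<inter> Q = {}" using part_disj[OF p(1) PQ(1,2)] by simp
      moreover have "?f P \<in> P" "?f Q \<in> Q" using mem PQ(1,2) by auto
      ultimately show False using PQ(3) by auto
    qed
  qed
  moreover have "?f ` D \<subseteq> board n" using mem part_sub[OF p(1)] by blast
  moreover have "finite (board n)" by (simp add: board_eq)
  ultimately show ?thesis using card_inj_on_le p(2) by blast
qed

lemma board1: "board 1 = {(0, 0), (1, 0)}" by (auto simp: board_def)

lemma card_board1: "card (board 1) = 2" unfolding board1 by simp

lemma dbig: "2 < k \<Longrightarrow> d k 1 = 0"
proof -
  assume k: "2 < k"
  have e: "{D. division 1 k D} = {}" using card_bound[of 1 k] card_board1 k by force
  thus ?thesis unfolding d_def by (simp only: e card.empty)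
qed

lemma sbig: "2 < k \<Longrightarrow> s k 1 = 0"
proof -
  assume k: "2 < k"
  have e: "{D. division 1 k D \<and> (\<forall>P\<in>D. \<not> ((0, 1 - 1) \<in> P \<and> (1, 1 - 1) \<in> P))} = {}"
    using card_bound[of 1 k] card_board1 k by force
  thus ?thesis unfolding s_def by (simp only: e card.empty)
qed

lemma div12: "division 1 2 D \<longleftrightarrow> D = {{(0, 0)}, {(1, 0)}}"
proof
  assume D: "division 1 2 D"
  have p: "part (board 1) D" "card D = 2" using D by (auto simp: division_part)
  have sub: "D \<subseteq> {{(0, 0)}, {(1, 0)}, {(0, 0), (1, 0)}}"
  proof
    fix P assume P: "P \<in> D"
    have "P \<subseteq> {(0, 0), (1, 0)}" "P \<noteq> {}" using part_sub[OF p(1) P] part_ne[OF p(1) P] board1 by auto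
    thus "P \<in> {{(0, 0)}, {(1, 0)}, {(0, 0), (1, 0)}}" by blast
  qed
  have nb: "{(0, 0), (1, 0)} \<notin> D"
  proof
    assume A: "{(0, 0), (1, 0)} \<in> D"
    have "D \<noteq> {{(0, 0), (1, 0)}}" using p(2) by auto
    then obtain R where R: "R \<in> D" "R \<noteq> {(0, 0), (1, 0)}" using A by blast
    have "R \<inter> {(0, 0), (1, 0)} = {}" using part_disj[OF p(1) R(1) A R(2)] .
    thus False using sub R(1) by blast
  qed
  hence "D \<subseteq> {{(0, 0)}, {(1, 0)}}" using sub by blast
  moreover have "card {{(0::nat, 0::nat)}, {(1, 0)}} = 2" by simp
  ultimately show "D = {{(0, 0)}, {(1, 0)}}" using p(2) by (intro card_subset_eq) auto
next
  assume D: "D = {{(0, 0)}, {(1, 0)}}"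
  show "division 1 2 D" unfolding D division_def using board1
    by (auto simp: piece_def conn_single)
qed

lemma d21: "d 2 1 = 1" unfolding d_def div12 by simp

lemma s21: "s 2 1 = 1"
proof -
  have e: "{D. division 1 2 D \<and> (\<forall>P\<in>D. \<not> ((0, 1 - 1) \<in> P \<and> (1, 1 - 1) \<in> P))} = {{{(0, 0)}, {(1, 0)}}}"
    unfolding div12 by auto
  thus ?thesis unfolding s_def by (simp only: e) simp
qed



lemma srec0: "1 \<le> n \<Longrightarrow> s 2 (Suc n) = d 0 n + 2 * d 1 n + s 2 n"
  using srec[of n 0] by (simp add: eval_nat_numeral)
lemma srec1: "1 \<le> n \<Longrightarrow> s 3 (Suc n) = d 1 n + 2 * d 2 n + s 3 n"
  using srec[of n 1] by (simp add: eval_nat_numeral)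
lemma srec2: "1 \<le> n \<Longrightarrow> s 4 (Suc n) = d 2 n + 2 * d 3 n + s 4 n"
  using srec[of n 2] by (simp add: eval_nat_numeral)
lemma drec0: "1 \<le> n \<Longrightarrow> d 2 (Suc n) = d 1 n + d 2 n + s 2 n + s 2 (Suc n)"
  using drec[of n 0] by (simp add: eval_nat_numeral)
lemma drec1: "1 \<le> n \<Longrightarrow> d 3 (Suc n) = d 2 n + d 3 n + s 3 n + s 3 (Suc n)"
  using drec[of n 1] by (simp add: eval_nat_numeral)
lemma drec2: "1 \<le> n \<Longrightarrow> d 4 (Suc n) = d 3 n + d 4 n + s 4 n + s 4 (Suc n)"
  using drec[of n 2] by (simp add: eval_nat_numeral)

definition "S2 (x::real) = 2 * x - 1"
definition "D2 (x::real) = 2 * x ^ 2 - x"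
definition "S3 (x::real) = 4/3 * x ^ 3 - 3 * x ^ 2 + 8/3 * x - 1"
definition "D3 (x::real) = 2/3 * x ^ 4 - 4/3 * x ^ 3 + 11/6 * x ^ 2 - 13/6 * x + 1"
definition "S4 (x::real) = 4/15 * x ^ 5 - 4/3 * x ^ 4 + 11/3 * x ^ 3 - 37/6 * x ^ 2 + 167/30 * x - 2"
definition "D4 (x::real) = 4/45 * x ^ 6 - 2/5 * x ^ 5 + 25/18 * x ^ 4 - 7/2 * x ^ 3 + 226/45 * x ^ 2 - 18/5 * x + 1"

lemma idS2: "S2 (x + 1) = 0 + 2 * 1 + S2 x" by (simp add: S2_def field_simps power_def numeral_eq_Suc)
lemma idS3: "S3 (x + 1) = 1 + 2 * D2 x + S3 x" by (simp add: S3_def D2_def field_simps power_def numeral_eq_Suc)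
lemma idS4: "S4 (x + 1) = D2 x + 2 * D3 x + S4 x" by (simp add: S4_def D2_def D3_def field_simps power_def numeral_eq_Suc)
lemma idD2: "D2 (x + 1) = 1 + D2 x + S2 x + S2 (x + 1)" by (simp add: S2_def D2_def field_simps power_def numeral_eq_Suc)
lemma idD3: "D3 (x + 1) = D2 x + D3 x + S3 x + S3 (x + 1)" by (simp add: S3_def D2_def D3_def field_simps power_def numeral_eq_Suc)
lemma idD4: "D4 (x + 1) = D3 x + D4 x + S4 x + S4 (x + 1)" by (simp add: S4_def D3_def D4_def field_simps power_def numeral_eq_Suc)

lemma main_ind: "1 \<le> n \<Longrightarrow> real (s 2 n) = S2 (real n) \<and> real (d 2 n) = D2 (real n) \<and>
  real (s 3 n) = S3 (real n) \<and> real (d 3 n) = D3 (real n) \<and> real (s 4 n) = S4 (real n) \<and> real (d 4 n) = D4 (real n)"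
proof (induction n rule: nat_induct_at_least)
  case base
  have z: "d 3 1 = 0" "d 4 1 = 0" "s 3 1 = 0" "s 4 1 = 0" by (rule dbig sbig, simp)+
  show ?case using z d21 s21 by (simp add: S2_def D2_def S3_def D3_def S4_def D4_def)
next
  case (Suc n)
  note n = Suc.hyps
  note IH = Suc.IH
  let ?x = "real n"
  have rs: "real (Suc n) = ?x + 1" by simp
  have a: "real (s 2 (Suc n)) = S2 (real (Suc n))"
    unfolding rs idS2 srec0[OF n] using IH d0[OF n] d1[OF n] by simp
  have b: "real (s 3 (Suc n)) = S3 (real (Suc n))"
    unfolding rs idS3 srec1[OF n] using IH d1[OF n] by simp
  have c: "real (s 4 (Suc n)) = S4 (real (Suc n))"
    unfolding rs idS4 srec2[OF n] using IH by simp
  have e: "real (d 2 (Suc n)) = D2 (real (Suc n))"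
    using a unfolding rs idD2 drec0[OF n] using IH d1[OF n] by simp
  have f: "real (d 3 (Suc n)) = D3 (real (Suc n))"
    using b unfolding rs idD3 drec1[OF n] using IH by simp
  have g: "real (d 4 (Suc n)) = D4 (real (Suc n))"
    using c unfolding rs idD4 drec2[OF n] using IH by simp
  show ?case using a b c e f g by simp
qed

theorem mainTheorem5:
  fixes n :: nat
  assumes "n \<ge> 1"
  shows "real (s 4 n) = 4/15 * real n ^ 5 - 4/3 * real n ^ 4 + 11/3 * real n ^ 3
            - 37/6 * real n ^ 2 + 167/30 * real n - 2 \<and>
         real (d 4 n) = 4/45 * real n ^ 6 - 2/5 * real n ^ 5 + 25/18 * real n ^ 4
            - 7/2 * real n ^ 3 + 226/45 * real n ^ 2 - 18/5 * real n + 1"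
  using main_ind[OF assms] unfolding S4_def D4_def by simp


end
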